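(* Let $(\mathcal{D},\Psi)$ be a braided monoidal category, let $(A,m,u)$ be an algebra in $\mathcal{D}$, let $S$ be an object of $\mathcal{D}$ and $\phi\colon S\to A$ a morphism in $\mathcal{D}$. Then the left centralizer $\operatorname{Cent}^l_A(S)\to A$ admits the structure of an algebra in $\mathcal{D}$, unique up to unique isomorphism of algebras, such that the structure morphism $\operatorname{Cent}^l_A(S)\to A$ is a morphism of algebras in $\mathcal{D}$.
   Context: All categories are $\Bbbk$-linear abelian monoidal categories over a field $\Bbbk$ (associativity and unit isomorphisms suppressed). The left centralizer $\operatorname{Cent}^l_A(S)\to A$ is defined as the terminal object in the category whose objects are pairs $(C,\gamma)$ with $C\in\mathcal{D}$ and $\gamma\colon C\to A$ a morphism in $\mathcal{D}$ satisfying $m(\gamma\otimes\phi)=m(\phi\otimes\gamma)\Psi_{C,S}$ as morphisms $C\otimes S\to A$, and whose morphisms $(C,\gamma)\to(C',\gamma')$ are morphisms $f\colon C\to C'$ in $\mathcal{D}$ with $\gamma' f=\gamma$. *)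

theory Defs
  imports Main
begin

text \<open>Associativity and unit
  isomorphisms are suppressed (strict monoidal structure), as in the paper.\<close>

record ('o, 'a) bmcat =
  Arr   :: "'a set"
  dom   :: "'a \<Rightarrow> 'o"
  cod   :: "'a \<Rightarrow> 'o"
  comp  :: "'a \<Rightarrow> 'a \<Rightarrow> 'a"      (* comp D g f = g \<circ> f *)
  idm   :: "'o \<Rightarrow> 'a"
  tob   :: "'o \<Rightarrow> 'o \<Rightarrow> 'o"
  tar   :: "'a \<Rightarrow> 'a \<Rightarrow> 'a"
  unit  :: "'o"
  braid :: "'o \<Rightarrow> 'o \<Rightarrow> 'a"

definition hom :: "('o, 'a, 'x) bmcat_scheme \<Rightarrow> 'o \<Rightarrow> 'o \<Rightarrow> 'a set" where
  "hom D X Y = {f \<in> Arr D. dom D f = X \<and> cod D f = Y}"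

definition iso_mor :: "('o, 'a, 'x) bmcat_scheme \<Rightarrow> 'a \<Rightarrow> bool" where
  "iso_mor D f \<longleftrightarrow> f \<in> Arr D \<and> (\<exists>g \<in> hom D (cod D f) (dom D f).
      comp D g f = idm D (dom D f) \<and> comp D f g = idm D (cod D f))"

definition braided_monoidal_cat :: "('o, 'a, 'x) bmcat_scheme \<Rightarrow> bool" where
  "braided_monoidal_cat D \<longleftrightarrow>
    \<comment> \<open>category\<close>
    (\<forall>X. idm D X \<in> hom D X X) \<and>
    (\<forall>X Y Z f g. f \<in> hom D X Y \<longrightarrow> g \<in> hom D Y Z \<longrightarrow> comp D g f \<in> hom D X Z) \<and>
    (\<forall>X Y f. f \<in> hom D X Y \<longrightarrow> comp D (idm D Y) f = f \<and> comp D f (idm D X) = f) \<and>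
    (\<forall>W X Y Z f g h. f \<in> hom D W X \<longrightarrow> g \<in> hom D X Y \<longrightarrow> h \<in> hom D Y Z \<longrightarrow>
        comp D h (comp D g f) = comp D (comp D h g) f) \<and>
    \<comment> \<open>tensor bifunctor\<close>
    (\<forall>X Y X' Y' f g. f \<in> hom D X Y \<longrightarrow> g \<in> hom D X' Y' \<longrightarrow>
        tar D f g \<in> hom D (tob D X X') (tob D Y Y')) \<and>
    (\<forall>X Y. tar D (idm D X) (idm D Y) = idm D (tob D X Y)) \<and>
    (\<forall>X Y Z X' Y' Z' f g f' g'. f \<in> hom D X Y \<longrightarrow> g \<in> hom D Y Z \<longrightarrow>
        f' \<in> hom D X' Y' \<longrightarrow> g' \<in> hom D Y' Z' \<longrightarrow>
        tar D (comp D g f) (comp D g' f') = comp D (tar D g g') (tar D f f')) \<and>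
    \<comment> \<open>strictness (associativity and unit constraints suppressed)\<close>
    (\<forall>X Y Z. tob D (tob D X Y) Z = tob D X (tob D Y Z)) \<and>
    (\<forall>X. tob D (unit D) X = X \<and> tob D X (unit D) = X) \<and>
    (\<forall>f g h. f \<in> Arr D \<longrightarrow> g \<in> Arr D \<longrightarrow> h \<in> Arr D \<longrightarrow>
        tar D (tar D f g) h = tar D f (tar D g h)) \<and>
    (\<forall>f. f \<in> Arr D \<longrightarrow> tar D (idm D (unit D)) f = f \<and> tar D f (idm D (unit D)) = f) \<and>
    \<comment> \<open>braiding: natural isomorphism satisfying the hexagon axioms\<close>
    (\<forall>X Y. braid D X Y \<in> hom D (tob D X Y) (tob D Y X) \<and> iso_mor D (braid D X Y)) \<and>
    (\<forall>X Y X' Y' f g. f \<in> hom D X Y \<longrightarrow> g \<in> hom D X' Y' \<longrightarrow>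
        comp D (braid D Y Y') (tar D f g) = comp D (tar D g f) (braid D X X')) \<and>
    (\<forall>X Y Z. braid D X (tob D Y Z) =
        comp D (tar D (idm D Y) (braid D X Z)) (tar D (braid D X Y) (idm D Z))) \<and>
    (\<forall>X Y Z. braid D (tob D X Y) Z =
        comp D (tar D (braid D X Z) (idm D Y)) (tar D (idm D X) (braid D Y Z)))"

definition algebra :: "('o, 'a, 'x) bmcat_scheme \<Rightarrow> 'o \<Rightarrow> 'a \<Rightarrow> 'a \<Rightarrow> bool" where
  "algebra D A m u \<longleftrightarrow>
    m \<in> hom D (tob D A A) A \<and> u \<in> hom D (unit D) A \<and>
    comp D m (tar D m (idm D A)) = comp D m (tar D (idm D A) m) \<and>
    comp D m (tar D u (idm D A)) = idm D A \<and>
    comp D m (tar D (idm D A) u) = idm D A"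

definition algebra_mor ::
  "('o, 'a, 'x) bmcat_scheme \<Rightarrow> 'o \<Rightarrow> 'a \<Rightarrow> 'a \<Rightarrow> 'o \<Rightarrow> 'a \<Rightarrow> 'a \<Rightarrow> 'a \<Rightarrow> bool" where
  "algebra_mor D B mB uB A mA uA f \<longleftrightarrow>
    f \<in> hom D B A \<and>
    comp D f mB = comp D mA (tar D f f) \<and>
    comp D f uB = uA"

definition centralizes ::
  "('o, 'a, 'x) bmcat_scheme \<Rightarrow> 'a \<Rightarrow> 'o \<Rightarrow> 'a \<Rightarrow> 'o \<Rightarrow> 'a \<Rightarrow> bool" where
  "centralizes D m S \<phi> C \<gamma> \<longleftrightarrow>
    comp D m (tar D \<gamma> \<phi>) = comp D (comp D m (tar D \<phi> \<gamma>)) (braid D C S)"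

definition is_left_centralizer ::
  "('o, 'a, 'x) bmcat_scheme \<Rightarrow> 'o \<Rightarrow> 'a \<Rightarrow> 'o \<Rightarrow> 'a \<Rightarrow> 'o \<Rightarrow> 'a \<Rightarrow> bool" where
  "is_left_centralizer D A m S \<phi> Z \<zeta> \<longleftrightarrow>
    \<zeta> \<in> hom D Z A \<and> centralizes D m S \<phi> Z \<zeta> \<and>
    (\<forall>C \<gamma>. \<gamma> \<in> hom D C A \<longrightarrow> centralizes D m S \<phi> C \<gamma> \<longrightarrow>
        (\<exists>!f. f \<in> hom D C Z \<and> comp D \<zeta> f = \<gamma>))"

end

theory Submission
  imports Defs
begin

locale bmc =
  fixes D :: "('o, 'a) bmcat"
  assumes bm: "braided_monoidal_cat D"
begin

lemma hom_iff: "f \<in> hom D X Y \<longleftrightarrow> f \<in> Arr D \<and> dom D f = X \<and> cod D f = Y"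
  by (simp add: hom_def)

lemmas ax = bm[unfolded braided_monoidal_cat_def]
lemmas ax1 = ax[THEN conjunct1]
lemmas ax2 = ax[THEN conjunct2, THEN conjunct1]
lemmas ax3 = ax[THEN conjunct2, THEN conjunct2, THEN conjunct1]
lemmas ax4 = ax[THEN conjunct2, THEN conjunct2, THEN conjunct2, THEN conjunct1]
lemmas ax5 = ax[THEN conjunct2, THEN conjunct2, THEN conjunct2, THEN conjunct2, THEN conjunct1]
lemmas ax6 = ax[THEN conjunct2, THEN conjunct2, THEN conjunct2, THEN conjunct2, THEN conjunct2, THEN conjunct1]
lemmas ax7 = ax[THEN conjunct2, THEN conjunct2, THEN conjunct2, THEN conjunct2, THEN conjunct2, THEN conjunct2, THEN conjunct1]
lemmas ax8 = ax[THEN conjunct2, THEN conjunct2, THEN conjunct2, THEN conjunct2, THEN conjunct2, THEN conjunct2, THEN conjunct2, THEN conjunct1]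
lemmas ax9 = ax[THEN conjunct2, THEN conjunct2, THEN conjunct2, THEN conjunct2, THEN conjunct2, THEN conjunct2, THEN conjunct2, THEN conjunct2, THEN conjunct1]
lemmas ax10 = ax[THEN conjunct2, THEN conjunct2, THEN conjunct2, THEN conjunct2, THEN conjunct2, THEN conjunct2, THEN conjunct2, THEN conjunct2, THEN conjunct2, THEN conjunct1]
lemmas ax11 = ax[THEN conjunct2, THEN conjunct2, THEN conjunct2, THEN conjunct2, THEN conjunct2, THEN conjunct2, THEN conjunct2, THEN conjunct2, THEN conjunct2, THEN conjunct2, THEN conjunct1]
lemmas ax12 = ax[THEN conjunct2, THEN conjunct2, THEN conjunct2, THEN conjunct2, THEN conjunct2, THEN conjunct2, THEN conjunct2, THEN conjunct2, THEN conjunct2, THEN conjunct2, THEN conjunct2, THEN conjunct1]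
lemmas ax13 = ax[THEN conjunct2, THEN conjunct2, THEN conjunct2, THEN conjunct2, THEN conjunct2, THEN conjunct2, THEN conjunct2, THEN conjunct2, THEN conjunct2, THEN conjunct2, THEN conjunct2, THEN conjunct2, THEN conjunct1]
lemmas ax14 = ax[THEN conjunct2, THEN conjunct2, THEN conjunct2, THEN conjunct2, THEN conjunct2, THEN conjunct2, THEN conjunct2, THEN conjunct2, THEN conjunct2, THEN conjunct2, THEN conjunct2, THEN conjunct2, THEN conjunct2, THEN conjunct1]
lemmas ax15 = ax[THEN conjunct2, THEN conjunct2, THEN conjunct2, THEN conjunct2, THEN conjunct2, THEN conjunct2, THEN conjunct2, THEN conjunct2, THEN conjunct2, THEN conjunct2, THEN conjunct2, THEN conjunct2, THEN conjunct2, THEN conjunct2]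

lemma arr_id[simp]: "idm D X \<in> Arr D" "dom D (idm D X) = X" "cod D (idm D X) = X"
  using ax1[rule_format, of X] by (auto simp: hom_def)

lemma arr_comp[simp]:
  assumes "f \<in> Arr D" "g \<in> Arr D" "cod D f = dom D g"
  shows "comp D g f \<in> Arr D" "dom D (comp D g f) = dom D f" "cod D (comp D g f) = cod D g"
proof -
  have "comp D g f \<in> hom D (dom D f) (cod D g)"
    using assms by (intro ax2[rule_format]) (auto simp: hom_iff)
  then show "comp D g f \<in> Arr D" "dom D (comp D g f) = dom D f" "cod D (comp D g f) = cod D g"
    by (auto simp: hom_iff)
qed

lemma arr_tar[simp]:
  assumes "f \<in> Arr D" "g \<in> Arr D"
  shows "tar D f g \<in> Arr D" "dom D (tar D f g) = tob D (dom D f) (dom D g)"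
    "cod D (tar D f g) = tob D (cod D f) (cod D g)"
proof -
  have "tar D f g \<in> hom D (tob D (dom D f) (dom D g)) (tob D (cod D f) (cod D g))"
    using assms by (intro ax5[rule_format]) (auto simp: hom_iff)
  then show "tar D f g \<in> Arr D" "dom D (tar D f g) = tob D (dom D f) (dom D g)"
    "cod D (tar D f g) = tob D (cod D f) (cod D g)"
    by (auto simp: hom_iff)
qed

lemma arr_braid[simp]: "braid D X Y \<in> Arr D" "dom D (braid D X Y) = tob D X Y"
  "cod D (braid D X Y) = tob D Y X"
  using ax12[rule_format, of X Y] by (auto simp: hom_def)

lemma braid_iso: "iso_mor D (braid D X Y)"
  using ax12[rule_format, of X Y] by auto

lemma comp_assoc[simp]:
  assumes "f \<in> Arr D" "g \<in> Arr D" "h \<in> Arr D" "cod D f = dom D g" "cod D g = dom D h"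
  shows "comp D (comp D h g) f = comp D h (comp D g f)"
proof -
  have "f \<in> hom D (dom D f) (cod D f)" "g \<in> hom D (cod D f) (cod D g)" "h \<in> hom D (cod D g) (cod D h)"
    using assms by (auto simp: hom_iff)
  then show ?thesis using ax4[rule_format] by metis
qed

lemma id_left[simp]: "f \<in> Arr D \<Longrightarrow> cod D f = X \<Longrightarrow> comp D (idm D X) f = f"
  using ax3[rule_format, of f "dom D f" X] by (auto simp: hom_def)

lemma id_right[simp]: "f \<in> Arr D \<Longrightarrow> dom D f = X \<Longrightarrow> comp D f (idm D X) = f"
  using ax3[rule_format, of f X "cod D f"] by (auto simp: hom_def)

lemma tar_id[simp]: "tar D (idm D X) (idm D Y) = idm D (tob D X Y)"
  using ax6 by auto

lemma interchange:
  assumes "f \<in> Arr D" "g \<in> Arr D" "cod D f = dom D g" "f' \<in> Arr D" "g' \<in> Arr D" "cod D f' = dom D g'"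
  shows "tar D (comp D g f) (comp D g' f') = comp D (tar D g g') (tar D f f')"
proof -
  have "f \<in> hom D (dom D f) (cod D f)" "g \<in> hom D (cod D f) (cod D g)"
    "f' \<in> hom D (dom D f') (cod D f')" "g' \<in> hom D (cod D f') (cod D g')"
    using assms by (auto simp: hom_iff)
  then show ?thesis using ax7[rule_format] by metis
qed

lemma tob_assoc[simp]: "tob D (tob D X Y) Z = tob D X (tob D Y Z)"
  using ax8 by auto
lemma tob_unit[simp]: "tob D (unit D) X = X" "tob D X (unit D) = X"
  using ax9 by auto

lemma tar_assoc[simp]: "f \<in> Arr D \<Longrightarrow> g \<in> Arr D \<Longrightarrow> h \<in> Arr D \<Longrightarrow>
        tar D (tar D f g) h = tar D f (tar D g h)"
  using ax10 by auto

lemma tar_unit[simp]: "f \<in> Arr D \<Longrightarrow> tar D (idm D (unit D)) f = f"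
   "f \<in> Arr D \<Longrightarrow> tar D f (idm D (unit D)) = f"
  using ax11 by auto

lemma braid_nat:
  "f \<in> hom D X Y \<Longrightarrow> g \<in> hom D X' Y' \<Longrightarrow>
        comp D (braid D Y Y') (tar D f g) = comp D (tar D g f) (braid D X X')"
  using ax13 by blast

lemma hex2: "braid D (tob D X Y) Z =
        comp D (tar D (braid D X Z) (idm D Y)) (tar D (idm D X) (braid D Y Z))"
  using ax15 by blast

lemma braid_unit: "braid D (unit D) X = idm D X"
proof -
  let ?b = "braid D (unit D) X"
  have "braid D (tob D (unit D) (unit D)) X = comp D ?b ?b"
    using hex2[of "unit D" "unit D" X] by simp
  hence e: "comp D ?b ?b = ?b" by simp
  obtain g where g: "g \<in> hom D X X" "comp D g ?b = idm D X"
    using braid_iso[of "unit D" X] unfolding iso_mor_def by auto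
  have ga: "g \<in> Arr D" "dom D g = X" "cod D g = X" using g(1) by (auto simp: hom_iff)
  have 1: "comp D (comp D g ?b) ?b = comp D g (comp D ?b ?b)"
    by (rule comp_assoc) (use ga in auto)
  have "?b = comp D (idm D X) ?b" by simp
  also have "\<dots> = comp D (comp D g ?b) ?b" by (simp only: g(2))
  also have "\<dots> = comp D g ?b" by (simp only: 1 e)
  also have "\<dots> = idm D X" by (rule g(2))
  finally show ?thesis .
qed

end

locale cz = bmc +
  fixes A S Z :: 'o and m u \<phi> \<zeta> :: 'a
  assumes alg: "algebra D A m u"
    and phi: "\<phi> \<in> hom D S A"
    and lc: "is_left_centralizer D A m S \<phi> Z \<zeta>"
begin

lemma m_arr[simp]: "m \<in> Arr D" "dom D m = tob D A A" "cod D m = A"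
  using alg by (auto simp: algebra_def hom_iff)
lemma u_arr[simp]: "u \<in> Arr D" "dom D u = unit D" "cod D u = A"
  using alg by (auto simp: algebra_def hom_iff)
lemma phi_arr[simp]: "\<phi> \<in> Arr D" "dom D \<phi> = S" "cod D \<phi> = A"
  using phi by (auto simp: hom_iff)
lemma zeta_arr[simp]: "\<zeta> \<in> Arr D" "dom D \<zeta> = Z" "cod D \<zeta> = A"
  using lc by (auto simp: is_left_centralizer_def hom_iff)

lemma massoc: "comp D m (tar D m (idm D A)) = comp D m (tar D (idm D A) m)"
  using alg by (simp add: algebra_def)
lemma lunit: "comp D m (tar D u (idm D A)) = idm D A"
  using alg by (simp add: algebra_def)

lemma massoc': "h \<in> Arr D \<Longrightarrow> cod D h = tob D A (tob D A A) \<Longrightarrow>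
   comp D m (comp D (tar D m (idm D A)) h) = comp D m (comp D (tar D (idm D A) m) h)"
  by (metis massoc comp_assoc arr_tar arr_id m_arr tob_assoc)

lemma cent0: "comp D m (tar D \<zeta> \<phi>) = comp D (comp D m (tar D \<phi> \<zeta>)) (braid D Z S)"
  using lc by (simp add: is_left_centralizer_def centralizes_def)

lemma cent: "comp D m (tar D \<zeta> \<phi>) = comp D m (comp D (tar D \<phi> \<zeta>) (braid D Z S))"
  using cent0 by simp

lemma cent_h: "h \<in> Arr D \<Longrightarrow> cod D h = tob D Z S \<Longrightarrow>
  comp D m (comp D (tar D \<zeta> \<phi>) h) = comp D m (comp D (tar D \<phi> \<zeta>) (comp D (braid D Z S) h))"
proof -
  assume h: "h \<in> Arr D" "cod D h = tob D Z S"
  have "comp D (comp D m (tar D \<zeta> \<phi>)) h = comp D (comp D (comp D m (tar D \<phi> \<zeta>)) (braid D Z S)) h"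
    by (simp only: cent0)
  thus ?thesis using h by simp
qed

lemma univ: "\<gamma> \<in> hom D C A \<Longrightarrow> centralizes D m S \<phi> C \<gamma> \<Longrightarrow>
   \<exists>!f. f \<in> hom D C Z \<and> comp D \<zeta> f = \<gamma>"
  using lc by (simp add: is_left_centralizer_def)

lemma cent_comp:
  assumes f: "f \<in> hom D C Z"
  shows "centralizes D m S \<phi> C (comp D \<zeta> f)"
proof -
  have fa[simp]: "f \<in> Arr D" "dom D f = C" "cod D f = Z" using f by (auto simp: hom_iff)
  have "comp D m (tar D (comp D \<zeta> f) \<phi>) = comp D m (comp D (tar D \<zeta> \<phi>) (tar D f (idm D S)))"
    using interchange[of f \<zeta> "idm D S" \<phi>] by simp
  also have "\<dots> = comp D m (comp D (tar D \<phi> \<zeta>) (comp D (braid D Z S) (tar D f (idm D S))))"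
    by (rule cent_h) simp_all
  also have "\<dots> = comp D m (comp D (tar D \<phi> \<zeta>) (comp D (tar D (idm D S) f) (braid D C S)))"
    using braid_nat[of f C Z "idm D S" S S] f by (simp add: hom_iff)
  also have "\<dots> = comp D m (comp D (tar D \<phi> (comp D \<zeta> f)) (braid D C S))"
    using interchange[of "idm D S" \<phi> f \<zeta>] by simp
  finally show ?thesis by (simp add: centralizes_def)
qed

lemma mono: "f \<in> hom D C Z \<Longrightarrow> g \<in> hom D C Z \<Longrightarrow> comp D \<zeta> f = comp D \<zeta> g \<Longrightarrow> f = g"
proof -
  assume f: "f \<in> hom D C Z" and g: "g \<in> hom D C Z" and e: "comp D \<zeta> f = comp D \<zeta> g"
  have h: "comp D \<zeta> f \<in> hom D C A" using f by (simp add: hom_iff)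
  have u: "\<exists>!x. x \<in> hom D C Z \<and> comp D \<zeta> x = comp D \<zeta> f"
    by (rule univ[OF h cent_comp[OF f]])
  obtain x where x: "\<And>y. y \<in> hom D C Z \<and> comp D \<zeta> y = comp D \<zeta> f \<Longrightarrow> y = x"
    using u by (elim ex1E) blast
  have "f = x" by (rule x) (simp only: f refl simp_thms)
  moreover have "g = x" by (rule x) (simp only: g e refl simp_thms)
  ultimately show ?thesis by (simp only:)
qed

lemma mu_cent: "centralizes D m S \<phi> (tob D Z Z) (comp D m (tar D \<zeta> \<zeta>))"
proof -
  let ?b = "braid D Z S"
  have "comp D m (tar D (comp D m (tar D \<zeta> \<zeta>)) \<phi>) =
        comp D m (comp D (tar D m (idm D A)) (tar D \<zeta> (tar D \<zeta> \<phi>)))"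
    using interchange[of "tar D \<zeta> \<zeta>" m \<phi> "idm D A"] by simp
  also have "\<dots> = comp D m (comp D (tar D (idm D A) m) (tar D \<zeta> (tar D \<zeta> \<phi>)))"
    by (rule massoc') simp_all
  also have "\<dots> = comp D m (tar D \<zeta> (comp D m (tar D \<zeta> \<phi>)))"
    using interchange[of \<zeta> "idm D A" "tar D \<zeta> \<phi>" m] by simp
  also have "\<dots> = comp D m (tar D \<zeta> (comp D m (comp D (tar D \<phi> \<zeta>) ?b)))"
    by (simp add: cent)
  also have "\<dots> = comp D m (comp D (tar D (idm D A) m) (comp D (tar D \<zeta> (tar D \<phi> \<zeta>)) (tar D (idm D Z) ?b)))"
    using interchange[of \<zeta> "idm D A" "comp D (tar D \<phi> \<zeta>) ?b" m]
      interchange[of "idm D Z" \<zeta> ?b "tar D \<phi> \<zeta>"] by simp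
  also have "\<dots> = comp D m (comp D (tar D m (idm D A)) (comp D (tar D \<zeta> (tar D \<phi> \<zeta>)) (tar D (idm D Z) ?b)))"
    by (rule massoc'[symmetric]) simp_all
  also have "\<dots> = comp D m (comp D (tar D (comp D m (tar D \<zeta> \<phi>)) \<zeta>) (tar D (idm D Z) ?b))"
    using interchange[of "tar D \<zeta> \<phi>" m \<zeta> "idm D A"] by simp
  also have "\<dots> = comp D m (comp D (tar D (comp D m (comp D (tar D \<phi> \<zeta>) ?b)) \<zeta>) (tar D (idm D Z) ?b))"
    by (simp add: cent)
  also have "\<dots> = comp D m (comp D (tar D m (idm D A)) (comp D (tar D \<phi> (tar D \<zeta> \<zeta>))
         (comp D (tar D ?b (idm D Z)) (tar D (idm D Z) ?b))))"
    using interchange[of "comp D (tar D \<phi> \<zeta>) ?b" m \<zeta> "idm D A"]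
      interchange[of ?b "tar D \<phi> \<zeta>" "idm D Z" \<zeta>] by simp
  also have "\<dots> = comp D m (comp D (tar D (idm D A) m) (comp D (tar D \<phi> (tar D \<zeta> \<zeta>))
         (comp D (tar D ?b (idm D Z)) (tar D (idm D Z) ?b))))"
    by (rule massoc') simp_all
  also have "\<dots> = comp D m (comp D (tar D (idm D A) m) (comp D (tar D \<phi> (tar D \<zeta> \<zeta>))
         (braid D (tob D Z Z) S)))"
    by (simp add: hex2)
  also have "\<dots> = comp D m (comp D (tar D \<phi> (comp D m (tar D \<zeta> \<zeta>))) (braid D (tob D Z Z) S))"
    using interchange[of \<phi> "idm D A" "tar D \<zeta> \<zeta>" m] by simp
  finally show ?thesis by (simp add: centralizes_def)
qed
lemma runit: "comp D m (tar D (idm D A) u) = idm D A"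
  using alg by (simp add: algebra_def)

lemma lunit_h: "h \<in> Arr D \<Longrightarrow> cod D h = A \<Longrightarrow> comp D m (comp D (tar D u (idm D A)) h) = h"
proof -
  assume h: "h \<in> Arr D" "cod D h = A"
  have "comp D (comp D m (tar D u (idm D A))) h = h" using h by (simp only: lunit) simp
  thus ?thesis using h by simp
qed

lemma runit_h: "h \<in> Arr D \<Longrightarrow> cod D h = A \<Longrightarrow> comp D m (comp D (tar D (idm D A) u) h) = h"
proof -
  assume h: "h \<in> Arr D" "cod D h = A"
  have "comp D (comp D m (tar D (idm D A) u)) h = h" using h by (simp only: runit) simp
  thus ?thesis using h by simp
qed

lemma u_cent: "centralizes D m S \<phi> (unit D) u"
proof -
  have "comp D m (tar D u \<phi>) = comp D m (comp D (tar D u (idm D A)) \<phi>)"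
    using interchange[of "idm D (unit D)" u \<phi> "idm D A"] by simp
  also have "\<dots> = \<phi>" by (rule lunit_h) simp_all
  also have "\<dots> = comp D m (comp D (tar D (idm D A) u) \<phi>)" by (rule runit_h[symmetric]) simp_all
  also have "\<dots> = comp D m (tar D \<phi> u)"
    using interchange[of \<phi> "idm D A" "idm D (unit D)" u] by simp
  finally show ?thesis by (simp add: centralizes_def braid_unit)
qed

lemma exist: "\<exists>mZ uZ. algebra D Z mZ uZ \<and> algebra_mor D Z mZ uZ A m u \<zeta>"
proof -
  have "comp D m (tar D \<zeta> \<zeta>) \<in> hom D (tob D Z Z) A" by (simp add: hom_iff)
  from univ[OF this mu_cent] obtain mZ where
    mZ: "mZ \<in> hom D (tob D Z Z) Z" "comp D \<zeta> mZ = comp D m (tar D \<zeta> \<zeta>)" by blast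
  have "u \<in> hom D (unit D) A" by (simp add: hom_iff)
  from univ[OF this u_cent] obtain uZ where
    uZ: "uZ \<in> hom D (unit D) Z" "comp D \<zeta> uZ = u" by blast
  have mZa[simp]: "mZ \<in> Arr D" "dom D mZ = tob D Z Z" "cod D mZ = Z" using mZ by (auto simp: hom_iff)
  have uZa[simp]: "uZ \<in> Arr D" "dom D uZ = unit D" "cod D uZ = Z" using uZ by (auto simp: hom_iff)
  have zm: "comp D \<zeta> (comp D mZ h) = comp D m (comp D (tar D \<zeta> \<zeta>) h)"
    if "h \<in> Arr D" "cod D h = tob D Z Z" for h
  proof -
    have "comp D (comp D \<zeta> mZ) h = comp D (comp D m (tar D \<zeta> \<zeta>)) h" by (simp only: mZ(2))
    thus ?thesis using that by simp
  qed
  have as: "comp D mZ (tar D mZ (idm D Z)) = comp D mZ (tar D (idm D Z) mZ)"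
  proof (rule mono)
    show "comp D mZ (tar D mZ (idm D Z)) \<in> hom D (tob D Z (tob D Z Z)) Z" by (simp add: hom_iff)
    show "comp D mZ (tar D (idm D Z) mZ) \<in> hom D (tob D Z (tob D Z Z)) Z" by (simp add: hom_iff)
    have "comp D \<zeta> (comp D mZ (tar D mZ (idm D Z))) = comp D m (comp D (tar D \<zeta> \<zeta>) (tar D mZ (idm D Z)))"
      by (rule zm) simp_all
    also have "\<dots> = comp D m (tar D (comp D m (tar D \<zeta> \<zeta>)) \<zeta>)"
      using interchange[of mZ \<zeta> "idm D Z" \<zeta>] mZ(2) by simp
    also have "\<dots> = comp D m (comp D (tar D m (idm D A)) (tar D \<zeta> (tar D \<zeta> \<zeta>)))"
      using interchange[of "tar D \<zeta> \<zeta>" m \<zeta> "idm D A"] by simp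
    also have "\<dots> = comp D m (comp D (tar D (idm D A) m) (tar D \<zeta> (tar D \<zeta> \<zeta>)))"
      by (rule massoc') simp_all
    also have "\<dots> = comp D m (tar D \<zeta> (comp D m (tar D \<zeta> \<zeta>)))"
      using interchange[of \<zeta> "idm D A" "tar D \<zeta> \<zeta>" m] by simp
    also have "\<dots> = comp D m (comp D (tar D \<zeta> \<zeta>) (tar D (idm D Z) mZ))"
      using interchange[of "idm D Z" \<zeta> mZ \<zeta>] mZ(2) by simp
    also have "\<dots> = comp D \<zeta> (comp D mZ (tar D (idm D Z) mZ))"
      by (rule zm[symmetric]) simp_all
    finally show "comp D \<zeta> (comp D mZ (tar D mZ (idm D Z))) = comp D \<zeta> (comp D mZ (tar D (idm D Z) mZ))" .
  qed
  have lu: "comp D mZ (tar D uZ (idm D Z)) = idm D Z"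
  proof (rule mono)
    show "comp D mZ (tar D uZ (idm D Z)) \<in> hom D Z Z" by (simp add: hom_iff)
    show "idm D Z \<in> hom D Z Z" by (simp add: hom_iff)
    have "comp D \<zeta> (comp D mZ (tar D uZ (idm D Z))) = comp D m (comp D (tar D \<zeta> \<zeta>) (tar D uZ (idm D Z)))"
      by (rule zm) simp_all
    also have "\<dots> = comp D m (tar D u \<zeta>)"
      using interchange[of uZ \<zeta> "idm D Z" \<zeta>] uZ(2) by simp
    also have "\<dots> = comp D m (comp D (tar D u (idm D A)) \<zeta>)"
      using interchange[of "idm D (unit D)" u \<zeta> "idm D A"] by simp
    also have "\<dots> = \<zeta>" by (rule lunit_h) simp_all
    finally show "comp D \<zeta> (comp D mZ (tar D uZ (idm D Z))) = comp D \<zeta> (idm D Z)" by simp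
  qed
  have ru: "comp D mZ (tar D (idm D Z) uZ) = idm D Z"
  proof (rule mono)
    show "comp D mZ (tar D (idm D Z) uZ) \<in> hom D Z Z" by (simp add: hom_iff)
    show "idm D Z \<in> hom D Z Z" by (simp add: hom_iff)
    have "comp D \<zeta> (comp D mZ (tar D (idm D Z) uZ)) = comp D m (comp D (tar D \<zeta> \<zeta>) (tar D (idm D Z) uZ))"
      by (rule zm) simp_all
    also have "\<dots> = comp D m (tar D \<zeta> u)"
      using interchange[of "idm D Z" \<zeta> uZ \<zeta>] uZ(2) by simp
    also have "\<dots> = comp D m (comp D (tar D (idm D A) u) \<zeta>)"
      using interchange[of \<zeta> "idm D A" "idm D (unit D)" u] by simp
    also have "\<dots> = \<zeta>" by (rule runit_h) simp_all
    finally show "comp D \<zeta> (comp D mZ (tar D (idm D Z) uZ)) = comp D \<zeta> (idm D Z)" by simp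
  qed
  have "algebra D Z mZ uZ" unfolding algebra_def using mZ(1) uZ(1) as lu ru by blast
  moreover have "algebra_mor D Z mZ uZ A m u \<zeta>" unfolding algebra_mor_def
    using mZ(2) uZ(2) by (simp add: hom_iff)
  ultimately show ?thesis by blast
qed

lemma uniq:
  assumes "algebra D Z mZ uZ \<and> algebra_mor D Z mZ uZ A m u \<zeta> \<and>
            algebra D Z mZ' uZ' \<and> algebra_mor D Z mZ' uZ' A m u \<zeta>"
  shows "\<exists>!f. algebra_mor D Z mZ uZ Z mZ' uZ' f \<and> iso_mor D f \<and> comp D \<zeta> f = \<zeta>"
proof -
  have h: "mZ \<in> hom D (tob D Z Z) Z" "uZ \<in> hom D (unit D) Z"
     "mZ' \<in> hom D (tob D Z Z) Z" "uZ' \<in> hom D (unit D) Z"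
    and e: "comp D \<zeta> mZ = comp D m (tar D \<zeta> \<zeta>)" "comp D \<zeta> uZ = u"
     "comp D \<zeta> mZ' = comp D m (tar D \<zeta> \<zeta>)" "comp D \<zeta> uZ' = u"
    using assms by (auto simp: algebra_def algebra_mor_def)
  have mm: "mZ = mZ'" by (rule mono[OF h(1) h(3)]) (simp only: e)
  have uu: "uZ = uZ'" by (rule mono[OF h(2) h(4)]) (simp only: e)
  have idh: "idm D Z \<in> hom D Z Z" by (simp add: hom_iff)
  show ?thesis
  proof (rule ex1I[of _ "idm D Z"])
    show "algebra_mor D Z mZ uZ Z mZ' uZ' (idm D Z) \<and> iso_mor D (idm D Z) \<and> comp D \<zeta> (idm D Z) = \<zeta>"
      using h mm uu idh by (auto simp: algebra_mor_def iso_mor_def hom_iff)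
  next
    fix f assume f: "algebra_mor D Z mZ uZ Z mZ' uZ' f \<and> iso_mor D f \<and> comp D \<zeta> f = \<zeta>"
    hence fh: "f \<in> hom D Z Z" and fe: "comp D \<zeta> f = \<zeta>" by (auto simp: algebra_mor_def)
    show "f = idm D Z" by (rule mono[OF fh idh]) (simp add: fe)
  qed
qed

end

theorem proposition2p8:
  fixes D :: "('o, 'a) bmcat"
    and A S Z :: 'o and m u \<phi> \<zeta> :: 'a
  assumes "braided_monoidal_cat D"
    and "algebra D A m u"
    and "\<phi> \<in> hom D S A"
    and "is_left_centralizer D A m S \<phi> Z \<zeta>"
  shows "(\<exists>mZ uZ. algebra D Z mZ uZ \<and> algebra_mor D Z mZ uZ A m u \<zeta>) \<and>
         (\<forall>mZ uZ mZ' uZ'.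
            algebra D Z mZ uZ \<and> algebra_mor D Z mZ uZ A m u \<zeta> \<and>
            algebra D Z mZ' uZ' \<and> algebra_mor D Z mZ' uZ' A m u \<zeta> \<longrightarrow>
            (\<exists>!f. algebra_mor D Z mZ uZ Z mZ' uZ' f \<and> iso_mor D f \<and> comp D \<zeta> f = \<zeta>))"
proof -
  interpret cz D A S Z m u \<phi> \<zeta>
    using assms by (unfold_locales) auto
  show ?thesis using exist uniq by blast
qed

end
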